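(* Let $f_{\phi}:\mathbb{R}^D\to\mathbb{R}^H$ be the encoder of a Natural Posterior Network model, given by a neural network with piecewise (leaky) ReLU activations, so that $f_{\phi}$ is continuous and piecewise affine: there is a finite collection of affine regions $Q^{(1)},\dots,Q^{(R)}$ covering $\mathbb{R}^D$ such that $f_{\phi}(\mathbf{x}) = V^{(l)}\mathbf{x} + a^{(l)}$ for $\mathbf{x}\in Q^{(l)}$, with $V^{(l)}\in\mathbb{R}^{H\times D}$ and $a^{(l)}\in\mathbb{R}^H$. Suppose that every matrix $V^{(l)}$ has linearly independent rows. Let $\mathbb{P}(\mathbf{z}\mid\boldsymbol{\omega})$ be a probability density function on the latent space $\mathbb{R}^H$ which has bounded derivatives. Then for almost every $\mathbf{x}\in\mathbb{R}^D$, $$\mathbb{P}(f_{\phi}(\delta\cdot\mathbf{x})\mid\boldsymbol{\omega}) \longrightarrow 0 \quad\text{as } \delta\to\infty .$$ In particular, the predicted evidence $n(\delta\mathbf{x}) = N_H\,\mathbb{P}(f_{\phi}(\delta\mathbf{x})\mid\boldsymbol{\omega})$ (for any constant $N_H>0$) tends to $0$ as $\delta\to\infty$.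
   Context: A Natural Posterior Network consists of an encoder $f_{\phi}$ mapping an input $\mathbf{x}\in\mathbb{R}^D$ to a latent vector $\mathbf{z}=f_{\phi}(\mathbf{x})\in\mathbb{R}^H$, a decoder $g_{\psi}$ (which plays no role in this statement), and a normalized density $\mathbb{P}(\mathbf{z}\mid\boldsymbol{\omega})$ on $\mathbb{R}^H$ (e.g. a normalizing flow). For an input $\mathbf{x}$, the evidence (pseudo-count) is defined as $n = N_H\,\mathbb{P}(f_{\phi}(\mathbf{x})\mid\boldsymbol{\omega})$ with a fixed constant $N_H>0$ (the certainty budget). *)

theory Defs
  imports "HOL-Analysis.Analysis"
begin

definition lin_indep_rows :: "real^'d^'h \<Rightarrow> bool" where
  "lin_indep_rows V \<longleftrightarrow> inj (\<lambda>i. row i V) \<and> independent (range (\<lambda>i. row i V))"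

end

theory Submission imports Defs begin

lemma P_decay:
  fixes P :: "'a::euclidean_space \<Rightarrow> real"
  assumes nn: "\<And>z. 0 \<le> P z" and int: "integrable lborel P"
    and lip: "\<And>z w. \<bar>P z - P w\<bar> \<le> L * norm (z - w)" and L: "L > 0"
  shows "(P \<longlongrightarrow> 0) at_infinity"
proof (rule tendstoI)
  fix e :: real assume e: "e > 0"
  define r where "r = e / (2*L)"
  have r: "r > 0" using e L by (simp add: r_def)
  define c where "c = e/2 * measure lborel (ball (0::'a) r)"
  have c: "c > 0" using e r by (simp add: c_def)
  define s where "s = (\<lambda>(n::nat) z. indicator {z. real n \<le> norm z} z *\<^sub>R P z)"
  have meas: "{z::'a. real n \<le> norm z} \<in> sets lborel" for n
    by (simp add: closed_Collect_le borel_closed continuous_on_const continuous_on_norm_id)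
  have sint: "integrable lborel (s n)" for n
    unfolding s_def by (rule integrable_mult_indicator[OF meas int])
  have "(\<lambda>n. integral\<^sup>L lborel (s n)) \<longlonglongrightarrow> integral\<^sup>L lborel (\<lambda>z::'a. 0::real)"
  proof (rule Bochner_Integration.integral_dominated_convergence[where w=P and s=s and f="\<lambda>z::'a. 0::real" and M=lborel])
    show "(\<lambda>z::'a. 0::real) \<in> borel_measurable lborel" by simp
    show "s i \<in> borel_measurable lborel" for i using sint by auto
    show "integrable lborel P" by fact
    show "AE z in lborel. (\<lambda>i. s i z) \<longlonglongrightarrow> 0"
    proof (rule AE_I2)
      fix z :: 'a
      obtain N :: nat where "norm z < N" using reals_Archimedean2 by blast
      hence "\<forall>n\<ge>N. s n z = 0" unfolding s_def
        by (auto simp: indicator_def)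
      hence h: "eventually (\<lambda>i. s i z = 0) sequentially" by (auto simp: eventually_sequentially)
      show "(\<lambda>i. s i z) \<longlonglongrightarrow> 0" by (rule tendsto_eventually[OF h])
    qed
    show "AE z in lborel. norm (s i z) \<le> P z" for i
      using nn by (auto simp: s_def indicator_def)
  qed
  then have "(\<lambda>n. integral\<^sup>L lborel (s n)) \<longlonglongrightarrow> 0" by simp
  then obtain n where n: "integral\<^sup>L lborel (s n) < c"
    using c by (metis (no_types, lifting) eventually_sequentially order_refl order_tendstoD(2))
  have "\<forall>z. real n + r \<le> norm z \<longrightarrow> dist (P z) 0 < e"
  proof (intro allI impI, rule ccontr)
    fix z :: 'a assume z: "real n + r \<le> norm z" and "\<not> dist (P z) 0 < e"
    hence Pz: "P z \<ge> e" using nn[of z] by simp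
    have bnd: "e/2 * indicator (ball z r) w \<le> s n w" for w
    proof (cases "w \<in> ball z r")
      case True
      hence d: "norm (z - w) < r" by (simp add: dist_norm)
      have "norm z \<le> norm w + norm (z - w)" by (metis norm_triangle_sub add.commute)
      hence nw: "real n \<le> norm w" using z d by linarith
      have "P z - P w \<le> L * norm (z - w)" using lip[of z w] by linarith
      also have "\<dots> \<le> L * r" using d L by simp
      also have "\<dots> = e/2" using L by (simp add: r_def)
      finally have "P w \<ge> e/2" using Pz by linarith
      thus ?thesis using True nw by (simp add: s_def)
    next
      case False
      thus ?thesis using nn[of w] by (simp add: s_def indicator_def)
    qed
    have bint: "integrable lborel (\<lambda>w. e/2 * indicator (ball z r) w :: real)"
      using emeasure_bounded_finite[OF bounded_ball, of z r] by (intro integrable_mult_right integrable_real_indicator) (auto simp: less_top)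
    have "integral\<^sup>L lborel (\<lambda>w. e/2 * indicator (ball z r) w :: real) \<le> integral\<^sup>L lborel (s n)"
      by (rule integral_mono[OF bint sint bnd])
    moreover have "integral\<^sup>L lborel (\<lambda>w. e/2 * indicator (ball z r) w :: real) = c"
      using content_ball[of r z] content_ball[of r "0::'a"] r by (simp add: c_def)
    ultimately show False using n by linarith
  qed
  thus "\<forall>\<^sub>F z in at_infinity. dist (P z) 0 < e"
    unfolding eventually_at_infinity by blast
qed


lemma row_nonzero:
  fixes V :: "real^'d^'h"
  assumes "lin_indep_rows V"
  shows "V $ i \<noteq> 0"
proof
  assume "V $ i = 0"
  hence "row i V = 0" by (simp add: row_def vec_eq_iff)
  hence z: "0 \<in> range (\<lambda>i. row i V)" using rangeI[of "\<lambda>i. row i V" i] by simp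
  have ind: "independent (range (\<lambda>i. row i V))" using assms by (simp add: lin_indep_rows_def)
  show False using ind dependent_zero[OF z] by simp
qed

lemma AE_kernel:
  fixes V :: "real^'d^'h"
  assumes "lin_indep_rows V"
  shows "AE x in lborel. V *v x \<noteq> 0"
proof -
  obtain i :: 'h where True by blast
  have nz: "V $ i \<noteq> 0" by (rule row_nonzero[OF assms])
  let ?H = "{x. V $ i \<bullet> x = 0}"
  have "negligible ?H" using nz by (intro negligible_hyperplane) simp
  hence "?H \<in> null_sets lebesgue" by (simp add: negligible_iff_null_sets)
  moreover have "?H \<in> sets lborel" by (simp add: closed_hyperplane borel_closed)
  ultimately have "?H \<in> null_sets lborel" using null_sets_completion_iff by blast
  moreover have "{x \<in> space lborel. \<not> V *v x \<noteq> 0} \<subseteq> ?H"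
    by (auto simp: matrix_vector_mul_component vec_eq_iff)
  ultimately show ?thesis by (rule AE_I')
qed

theorem theorem1:
  fixes f :: "real^'d \<Rightarrow> real^'h"
    and R :: nat
    and Q :: "nat \<Rightarrow> (real^'d) set"
    and V :: "nat \<Rightarrow> real^'d^'h"
    and a :: "nat \<Rightarrow> real^'h"
    and P :: "real^'h \<Rightarrow> real"
    and P' :: "real^'h \<Rightarrow> real^'h \<Rightarrow> real"
  assumes f_cont: "continuous_on UNIV f"
    and cover: "(\<Union>l<R. Q l) = UNIV"
    and affine_pieces: "\<forall>l<R. \<forall>x\<in>Q l. f x = V l *v x + a l"
    and rows_indep: "\<forall>l<R. lin_indep_rows (V l)"
    and P_nonneg: "\<forall>z. 0 \<le> P z"
    and P_integrable: "integrable lborel P"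
    and P_normalized: "integral\<^sup>L lborel P = 1"
    and P_deriv: "\<forall>z. (P has_derivative P' z) (at z)"
    and P_deriv_bounded: "\<exists>B. \<forall>z. onorm (P' z) \<le> B"
  shows "AE x in lborel.
           ((\<lambda>\<delta>. P (f (\<delta> *\<^sub>R x))) \<longlongrightarrow> 0) at_top \<and>
           (\<forall>N_H::real. N_H > 0 \<longrightarrow> ((\<lambda>\<delta>. N_H * P (f (\<delta> *\<^sub>R x))) \<longlongrightarrow> 0) at_top)"
proof -
  obtain B where B: "\<And>z. onorm (P' z) \<le> B" using P_deriv_bounded by blast
  define L where "L = max B 1"
  have L: "L > 0" by (simp add: L_def)
  have lip: "\<bar>P z - P w\<bar> \<le> L * norm (z - w)" for z w
  proof -
    have "norm (P z - P w) \<le> L * norm (z - w)"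
    proof (rule differentiable_bound[where S=UNIV and f'=P'])
      fix y :: "real^'h"
      show "(P has_derivative P' y) (at y within UNIV)" using P_deriv by simp
      have "onorm (P' y) \<le> B" by (rule B)
      thus "onorm (P' y) \<le> L" unfolding L_def by linarith
    qed auto
    thus ?thesis by simp
  qed
  have Plim: "(P \<longlongrightarrow> 0) at_infinity"
    by (rule P_decay[OF _ P_integrable lip L]) (use P_nonneg in auto)
  have R: "R > 0" using cover by (cases R) auto
  have AEk: "AE x in lborel. \<forall>l\<in>{..<R}. V l *v x \<noteq> 0"
    by (rule AE_finite_allI) (use rows_indep AE_kernel in auto)
  have imp: "((\<lambda>\<delta>. P (f (\<delta> *\<^sub>R x))) \<longlongrightarrow> 0) at_top"
    if x: "\<forall>l\<in>{..<R}. V l *v x \<noteq> 0" for x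
  proof -
    define c where "c = Min ((\<lambda>l. norm (V l *v x)) ` {..<R})"
    define A where "A = Max ((\<lambda>l. norm (a l)) ` {..<R})"
    have c: "c > 0" unfolding c_def using R x by (subst Min_gr_iff) auto
    have bound: "norm (f (\<delta> *\<^sub>R x)) \<ge> \<delta> * c - A" if d: "\<delta> \<ge> 0" for \<delta>
    proof -
      obtain l where l: "l < R" "\<delta> *\<^sub>R x \<in> Q l" using cover by blast
      hence fe: "f (\<delta> *\<^sub>R x) = \<delta> *\<^sub>R (V l *v x) + a l"
        using affine_pieces by (simp add: matrix_vector_mult_scaleR)
      have "c \<le> norm (V l *v x)" unfolding c_def using l by (intro Min_le) auto
      hence "\<delta> * c \<le> \<delta> * norm (V l *v x)" using d by (simp add: mult_left_mono)
      moreover have "norm (a l) \<le> A" unfolding A_def using l by (intro Max_ge) auto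
      moreover have "norm (\<delta> *\<^sub>R (V l *v x)) \<le> norm (\<delta> *\<^sub>R (V l *v x) + a l) + norm (a l)"
        by (metis add_diff_cancel norm_triangle_ineq4)
      moreover have "norm (\<delta> *\<^sub>R (V l *v x)) = \<delta> * norm (V l *v x)" using d by simp
      ultimately show ?thesis unfolding fe by linarith
    qed
    have "filterlim (\<lambda>\<delta>. norm (f (\<delta> *\<^sub>R x))) at_top at_top"
      unfolding filterlim_at_top
    proof
      fix Z :: real
      show "\<forall>\<^sub>F \<delta> in at_top. Z \<le> norm (f (\<delta> *\<^sub>R x))"
        unfolding eventually_at_top_linorder
      proof (intro exI allI impI)
        fix \<delta> :: real assume d: "\<delta> \<ge> max 0 ((Z + A) / c)"
        hence "(Z + A) / c \<le> \<delta>" by linarith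
        hence "Z + A \<le> \<delta> * c" using c by (simp add: divide_le_eq)
        thus "Z \<le> norm (f (\<delta> *\<^sub>R x))" using bound[of \<delta>] d by linarith
      qed
    qed
    hence "filterlim (\<lambda>\<delta>. f (\<delta> *\<^sub>R x)) at_infinity at_top"
      by (simp add: filterlim_at_infinity_conv_norm_at_top)
    thus ?thesis by (rule filterlim_compose[OF Plim])
  qed
  show ?thesis
  proof (rule AE_mp[OF AEk AE_I2], intro impI)
    fix x assume "\<forall>l\<in>{..<R}. V l *v x \<noteq> 0"
    hence t: "((\<lambda>\<delta>. P (f (\<delta> *\<^sub>R x))) \<longlongrightarrow> 0) at_top" by (rule imp)
    show "((\<lambda>\<delta>. P (f (\<delta> *\<^sub>R x))) \<longlongrightarrow> 0) at_top \<and>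
           (\<forall>N_H::real. N_H > 0 \<longrightarrow> ((\<lambda>\<delta>. N_H * P (f (\<delta> *\<^sub>R x))) \<longlongrightarrow> 0) at_top)"
      using t tendsto_mult_right_zero[OF t] by blast
  qed
qed

end
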